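(* Let $H\in(0,1)$, $K\in(0,1]$, $T>0$, and let $B^{H,K}$ be a bifractional Brownian motion. Then $B^{H,K}$ satisfies (C1) with $\gamma=HK$, and (C2) with $\gamma=HK$ and $\kappa=2^{(1-K)/2}$; more precisely, for every $\varphi\in\Psi$ and small $\delta>0$, $$\sup_{\varphi(\delta)\le s\le T-\delta}\sup_{0<h\le\delta}\Big|\frac{\sigma^2_{B^{H,K}}(s,s+h)}{2^{1-K}h^{2HK}}-1\Big|\le\frac{8}{L(\delta)^{2-2HK}},\qquad L(\delta)=\varphi(\delta)/\delta.$$ Consequently $B^{H,K}$ has Orey index $HK$.
   Context: A bifractional Brownian motion with parameters $H\in(0,1)$, $K\in(0,1]$ is a centered Gaussian process $(B^{H,K}_t)_{t\ge0}$ with covariance $R_{HK}(t,s)=2^{-K}\big((t^{2H}+s^{2H})^K-|t-s|^{2HK}\big)$. $\sigma_X^2(s,t)=\mathbb{E}[X(t)-X(s)]^2$. $\Psi$: continuous $\varphi\colon(0,T]\to[0,\infty)$ with $\varphi(h)\to0$, $L(h):=\varphi(h)/h\to\infty$, $hL(h)^3\to0$ as $h\downarrow0$. (C1): $\sigma_X(0,\delta)=O(\delta^\gamma)$. (C2): there is $\kappa>0$ such that for every $\varphi\in\Psi$, $\sup_{\varphi(\delta)\le t\le T-\delta}\sup_{0<h\le\delta}|\sigma_X(t,t+h)/(\kappa h^\gamma)-1|\to0$ as $\delta\downarrow0$. Orey index: for every $\varphi\in\Psi$, $\inf\{\beta>0\colon\lim_{h\downarrow0}\sup_{\varphi(h)\le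 s\le T-h}h^\beta/\sigma_X(s,s+h)=0\}$, $\inf\{\beta>0\colon\lim_{h\downarrow0}h^\beta/\sigma_X(0,h)=0\}$, $\sup\{\beta>0\colon\lim_{h\downarrow0}\inf_{\varphi(h)\le s\le T-h}h^\beta/\sigma_X(s,s+h)=\infty\}$, $\sup\{\beta>0\colon\lim_{h\downarrow0}h^\beta/\sigma_X(0,h)=\infty\}$ all coincide. *)

theory Defs
  imports "HOL-Analysis.Analysis" "HOL-Library.Landau_Symbols"
begin

definition bfbm_cov :: "real \<Rightarrow> real \<Rightarrow> real \<Rightarrow> real \<Rightarrow> real" where
  "bfbm_cov H K t s =
     2 powr (- K) * ((t powr (2*H) + s powr (2*H)) powr K - \<bar>t - s\<bar> powr (2*H*K))"

text \<open>Incremental variance E[X(t)-X(s)]^2 of a centered process with covariance R.\<close>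
definition incr_var :: "(real \<Rightarrow> real \<Rightarrow> real) \<Rightarrow> real \<Rightarrow> real \<Rightarrow> real" where
  "incr_var R s t = R t t + R s s - 2 * R s t"

definition bfbm_sigma2 :: "real \<Rightarrow> real \<Rightarrow> real \<Rightarrow> real \<Rightarrow> real" where
  "bfbm_sigma2 H K s t = incr_var (bfbm_cov H K) s t"

definition bfbm_sigma :: "real \<Rightarrow> real \<Rightarrow> real \<Rightarrow> real \<Rightarrow> real" where
  "bfbm_sigma H K s t = sqrt (bfbm_sigma2 H K s t)"

definition Psi :: "real \<Rightarrow> (real \<Rightarrow> real) set" where
  "Psi T = {\<phi>. continuous_on {0<..T} \<phi> \<and> (\<forall>h\<in>{0<..T}. 0 \<le> \<phi> h) \<and>
      (\<phi> \<longlongrightarrow> 0) (at_right 0) \<and>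
      filterlim (\<lambda>h. \<phi> h / h) at_top (at_right 0) \<and>
      ((\<lambda>h. h * (\<phi> h / h) ^ 3) \<longlongrightarrow> 0) (at_right 0)}"

definition cond_C1 :: "(real \<Rightarrow> real \<Rightarrow> real) \<Rightarrow> real \<Rightarrow> bool" where
  "cond_C1 \<sigma> \<gamma> \<longleftrightarrow> (\<lambda>\<delta>. \<sigma> 0 \<delta>) \<in> O[at_right 0](\<lambda>\<delta>. \<delta> powr \<gamma>)"

text \<open>Condition (C2); the convergence of the double supremum to 0 is written
  out in epsilon form.\<close>
definition cond_C2 :: "real \<Rightarrow> (real \<Rightarrow> real \<Rightarrow> real) \<Rightarrow> real \<Rightarrow> real \<Rightarrow> bool" where
  "cond_C2 T \<sigma> \<gamma> \<kappa> \<longleftrightarrow> (\<forall>\<phi>\<in>Psi T. \<forall>\<epsilon>>0. eventually (\<lambda>\<delta>.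
      \<forall>t\<in>{\<phi> \<delta>..T - \<delta>}. \<forall>h\<in>{0<..\<delta>}. \<bar>\<sigma> t (t + h) / (\<kappa> * h powr \<gamma>) - 1\<bar> \<le> \<epsilon>)
     (at_right 0))"

definition orey_upper_int :: "real \<Rightarrow> (real \<Rightarrow> real \<Rightarrow> real) \<Rightarrow> (real \<Rightarrow> real) \<Rightarrow> real" where
  "orey_upper_int T \<sigma> \<phi> = Inf {\<beta>. \<beta> > 0 \<and> (\<forall>\<epsilon>>0. eventually (\<lambda>h.
      \<forall>s\<in>{\<phi> h..T - h}. \<bar>h powr \<beta> / \<sigma> s (s + h)\<bar> \<le> \<epsilon>) (at_right 0))}"

definition orey_upper_0 :: "(real \<Rightarrow> real \<Rightarrow> real) \<Rightarrow> real" where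
  "orey_upper_0 \<sigma> = Inf {\<beta>. \<beta> > 0 \<and> ((\<lambda>h. h powr \<beta> / \<sigma> 0 h) \<longlongrightarrow> 0) (at_right 0)}"

definition orey_lower_int :: "real \<Rightarrow> (real \<Rightarrow> real \<Rightarrow> real) \<Rightarrow> (real \<Rightarrow> real) \<Rightarrow> real" where
  "orey_lower_int T \<sigma> \<phi> = Sup {\<beta>. \<beta> > 0 \<and> (\<forall>M. eventually (\<lambda>h.
      \<forall>s\<in>{\<phi> h..T - h}. h powr \<beta> / \<sigma> s (s + h) \<ge> M) (at_right 0))}"

definition orey_lower_0 :: "(real \<Rightarrow> real \<Rightarrow> real) \<Rightarrow> real" where
  "orey_lower_0 \<sigma> = Sup {\<beta>. \<beta> > 0 \<and> filterlim (\<lambda>h. h powr \<beta> / \<sigma> 0 h) at_top (at_right 0)}"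

definition has_orey_index :: "real \<Rightarrow> (real \<Rightarrow> real \<Rightarrow> real) \<Rightarrow> real \<Rightarrow> bool" where
  "has_orey_index T \<sigma> \<gamma> \<longleftrightarrow> (\<forall>\<phi>\<in>Psi T.
      orey_upper_int T \<sigma> \<phi> = \<gamma> \<and> orey_upper_0 \<sigma> = \<gamma> \<and>
      orey_lower_int T \<sigma> \<phi> = \<gamma> \<and> orey_lower_0 \<sigma> = \<gamma>)"

end

theory Submission
  imports Defs "HOL-Real_Asymp.Real_Asymp"
begin

lemma powr_neg_mono: "(e::real) \<le> 0 \<Longrightarrow> 0 < x \<Longrightarrow> x \<le> y \<Longrightarrow> y powr e \<le> x powr e"
  by (rule powr_mono2') auto

lemma second_diff:
  fixes a b K :: real
  assumes a: "0 < a" "a \<le> b" and K: "0 < K" "K \<le> 1"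
  shows "\<bar>a powr K + b powr K - 2 * ((a+b)/2) powr K\<bar> \<le> a powr (K-2) * (b-a)^2/4"
proof (cases "a = b")
  case True then show ?thesis by simp
next
  case False
  hence ab: "a < b" using a by simp
  define m where "m = (a+b)/2"
  define D where "D = (\<lambda>n::nat. \<lambda>x::real. if n = 0 then x powr K else if n = 1 then K * x powr (K-1) else K*(K-1) * x powr (K-2))"
  have der: "\<forall>n t. n < 2 \<and> a \<le> t \<and> t \<le> b \<longrightarrow> (D n has_real_derivative D (Suc n) t) (at t)"
  proof (intro allI impI)
    fix n :: nat and t :: real assume h: "n < 2 \<and> a \<le> t \<and> t \<le> b"
    hence t: "0 < t" using a by auto
    show "(D n has_real_derivative D (Suc n) t) (at t)"
    proof (cases "n = 0")
      case True
      thus ?thesis using has_real_derivative_powr[OF t, of K] by (simp add: D_def)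
    next
      case False
      hence n1: "n = 1" using h by auto
      have "((\<lambda>x. K * x powr (K-1)) has_real_derivative K * ((K-1) * t powr (K-1-1))) (at t)"
        by (intro DERIV_cmult has_real_derivative_powr t)
      moreover have "K-1-1 = K-2" by simp
      ultimately show ?thesis using n1 by (simp add: D_def fun_eq_iff mult.assoc)
    qed
  qed
  have D0: "D 0 = (\<lambda>x. x powr K)" by (simp add: D_def fun_eq_iff)
  have am: "a < m" "m < b" using ab by (auto simp: m_def)
  obtain t1 where t1: "a < t1" "t1 < m" and e1:
    "a powr K = (\<Sum>n<2. D n m / fact n * (a - m)^n) + D 2 t1 / fact 2 * (a - m)^2"
    using Taylor[of 2 D "\<lambda>x. x powr K" a b m a, OF _ D0 der] am ab by auto
  obtain t2 where t2: "m < t2" "t2 < b" and e2: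
    "b powr K = (\<Sum>n<2. D n m / fact n * (b - m)^n) + D 2 t2 / fact 2 * (b - m)^2"
    using Taylor[of 2 D "\<lambda>x. x powr K" a b m b, OF _ D0 der] am ab by auto
  have bm: "b - m = (b-a)/2" "a - m = -((b-a)/2)" unfolding m_def by (simp_all add: field_simps)
  have sum2: "\<And>f::nat\<Rightarrow>real. (\<Sum>n<2. f n) = f 0 + f 1" by (simp add: numeral_2_eq_2)
  have eq: "a powr K + b powr K - 2 * m powr K = (D 2 t1 + D 2 t2) / 2 * ((b-a)/2)^2"
    using e1 e2 unfolding sum2 bm by (simp add: D_def field_simps power2_eq_square)
  have bnd: "\<bar>D 2 t\<bar> \<le> a powr (K-2)" if "a \<le> t" for t
  proof -
    have t: "0 < t" using that a by auto
    have "\<bar>D 2 t\<bar> = K * (1-K) * t powr (K-2)" using K by (simp add: D_def abs_mult)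
    also have "\<dots> \<le> 1 * t powr (K-2)"
      using K mult_le_one[of K "1-K"] by (intro mult_right_mono) auto
    also have "\<dots> \<le> a powr (K-2)" using powr_neg_mono[of "K-2" a t] K that a by simp
    finally show ?thesis .
  qed
  have "\<bar>a powr K + b powr K - 2 * m powr K\<bar> = \<bar>D 2 t1 + D 2 t2\<bar> / 2 * ((b-a)/2)^2"
    unfolding eq by (simp add: abs_mult)
  also have "\<dots> \<le> (a powr (K-2) + a powr (K-2)) / 2 * ((b-a)/2)^2"
    using bnd[of t1] bnd[of t2] t1 t2 am
    by (intro mult_right_mono divide_right_mono) (auto intro: order.trans[OF abs_triangle_ineq])
  also have "\<dots> = a powr (K-2) * (b-a)^2/4" by (simp add: power2_eq_square)
  finally show ?thesis by (simp add: m_def)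
qed

lemma incr_bound:
  fixes s h p :: real
  assumes "0 < s" "0 < h" "h \<le> s" "0 < p" "p < 2"
  shows "(s+h) powr p - s powr p \<le> 2*p*h * s powr (p-1)"
proof -
  have "\<And>x. s \<le> x \<Longrightarrow> x \<le> s+h \<Longrightarrow> ((\<lambda>x. x powr p) has_real_derivative p * x powr (p-1)) (at x)"
    using assms by (intro has_real_derivative_powr) auto
  then obtain z where z: "s < z" "z < s+h" and eq: "(s+h) powr p - s powr p = (s+h-s) * (p * z powr (p-1))"
    using MVT2[of s "s+h" "\<lambda>x. x powr p" "\<lambda>x. p * x powr (p-1)"] assms by auto
  have zb: "z powr (p-1) \<le> 2 * s powr (p-1)"
  proof (cases "p \<ge> 1")
    case True
    have "z powr (p-1) \<le> (2 * s) powr (p-1)" using True z assms by (intro powr_mono2) auto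
    also have "\<dots> = 2 powr (p-1) * s powr (p-1)" using assms by (simp add: powr_mult)
    also have "\<dots> \<le> 2 powr 1 * s powr (p-1)" using assms by (intro mult_right_mono powr_mono) auto
    finally show ?thesis by simp
  next
    case False
    have "z powr (p-1) \<le> s powr (p-1)" using False z assms by (intro powr_neg_mono) auto
    also have "\<dots> \<le> 2 * s powr (p-1)" by simp
    finally show ?thesis .
  qed
  have "(s+h) powr p - s powr p = h * p * z powr (p-1)" using eq by simp
  also have "\<dots> \<le> h * p * (2 * s powr (p-1))" using zb assms by (intro mult_left_mono) auto
  finally show ?thesis by (simp add: algebra_simps)
qed

lemma cov_diag: "0 \<le> t \<Longrightarrow> bfbm_cov H K t t = t powr (2*H*K)"
  by (simp add: bfbm_cov_def powr_mult powr_powr flip: mult_2 powr_add) 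

lemma sigma2_formula:
  assumes "0 \<le> s" "0 < h"
  shows "bfbm_sigma2 H K s (s+h) = (s+h) powr (2*H*K) + s powr (2*H*K)
     - 2 powr (1-K) * ((s powr (2*H) + (s+h) powr (2*H)) powr K - h powr (2*H*K))"
proof -
  have c: "bfbm_cov H K s (s+h) = 2 powr (-K) * ((s powr (2*H) + (s+h) powr (2*H)) powr K - h powr (2*H*K))"
    using assms by (simp add: bfbm_cov_def)
  have "(2::real) powr (1-K) = 2 powr 1 * 2 powr (-K)" by (subst powr_add[symmetric]) simp
  hence "2 * 2 powr (-K) = (2::real) powr (1-K)" by simp
  thus ?thesis using assms unfolding bfbm_sigma2_def incr_var_def
    by (simp add: cov_diag c flip: mult.assoc)
qed

lemma sigma2_zero:
  assumes "0 < h" "0 < H" "0 < K"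
  shows "bfbm_sigma2 H K 0 h = h powr (2*H*K)"
  using sigma2_formula[of 0 h H K] assms by (simp add: powr_powr)

lemma key_bound:
  fixes H K s h :: real
  assumes H: "0 < H" "H < 1" and K: "0 < K" "K \<le> 1" and h: "0 < h" "h \<le> s"
  shows "\<bar>bfbm_sigma2 H K s (s+h) / (2 powr (1-K) * h powr (2*H*K)) - 1\<bar> \<le> 4 * (h/s) powr (2 - 2*H*K)"
proof -
  have s: "0 < s" using h by simp
  define a where "a = s powr (2*H)"
  define b where "b = (s+h) powr (2*H)"
  define c where "c = 2 powr (1-K) * h powr (2*H*K)"
  have "(1::real) \<le> 2 powr (1-K)" using K by (intro ge_one_powr_ge_zero) auto
  hence c1: "h powr (2*H*K) \<le> c" unfolding c_def
    using mult_right_mono[of 1 "2 powr (1-K)" "h powr (2*H*K)"] by simp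
  have cpos: "0 < c" using h by (simp add: c_def)
  have a0: "0 < a" using s by (simp add: a_def)
  have ab: "a \<le> b" unfolding a_def b_def using H h by (intro powr_mono2) auto
  have sK: "s powr (2*H*K) = a powr K" "(s+h) powr (2*H*K) = b powr K"
    using s h by (simp_all add: a_def b_def powr_powr)
  have half: "2 powr (1-K) * (a+b) powr K = 2 * ((a+b)/2) powr K"
    using a0 ab by (simp add: powr_divide powr_diff)
  define Q where "Q = a powr K + b powr K - 2 * ((a+b)/2) powr K"
  have sig: "bfbm_sigma2 H K s (s+h) = Q + c"
  proof -
    have "bfbm_sigma2 H K s (s+h) = b powr K + a powr K - 2 powr (1-K) * ((a + b) powr K - h powr (2*H*K))"
      unfolding sigma2_formula[OF less_imp_le[OF s] h(1)] sK a_def b_def ..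
    also have "\<dots> = b powr K + a powr K - 2 powr (1-K) * (a + b) powr K + c"
      by (simp add: c_def algebra_simps)
    finally show ?thesis unfolding half Q_def by simp
  qed
  have ratio: "bfbm_sigma2 H K s (s+h) / c - 1 = Q / c" unfolding sig using cpos by (simp add: field_simps)
  have Qb: "\<bar>Q\<bar> \<le> a powr (K-2) * (b-a)^2/4" unfolding Q_def by (rule second_diff[OF a0 ab K])
  have ba: "b - a \<le> 4 * h * s powr (2*H-1)"
  proof -
    have "2*(2*H)*h * s powr (2*H-1) \<le> 4*h * s powr (2*H-1)"
      using H h by (intro mult_right_mono) auto
    thus ?thesis using incr_bound[of s h "2*H"] s h H unfolding a_def b_def by linarith
  qed
  have "(b-a)^2 \<le> (4 * h * s powr (2*H-1))^2" using ba ab by (intro power_mono) auto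
  hence "\<bar>Q\<bar> \<le> a powr (K-2) * (4 * h * s powr (2*H-1))^2 / 4"
  proof -
    have "a powr (K-2) * (b-a)^2/4 \<le> a powr (K-2) * (4 * h * s powr (2*H-1))^2 / 4"
      by (intro divide_right_mono mult_left_mono) (use \<open>(b-a)^2 \<le> _\<close> in auto)
    thus ?thesis using Qb by linarith
  qed
  also have "\<dots> = 4 * h^2 * (a powr (K-2) * (s powr (2*H-1) * s powr (2*H-1)))"
    by (simp add: power2_eq_square)
  also have "\<dots> = 4 * h^2 * s powr (2*H*K - 2)"
  proof -
    have "a powr (K-2) * (s powr (2*H-1) * s powr (2*H-1)) = s powr (2*H*(K-2) + ((2*H-1) + (2*H-1)))"
    proof -
      have e1: "s powr (2*H-1) * s powr (2*H-1) = s powr ((2*H-1)+(2*H-1))" by (simp only: powr_add)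
      have e2: "a powr (K-2) = s powr (2*H*(K-2))" using s by (simp add: a_def powr_powr)
      show ?thesis unfolding e1 e2 by (simp only: powr_add)
    qed
    also have "2*H*(K-2) + ((2*H-1) + (2*H-1)) = 2*H*K - 2" by (simp add: algebra_simps)
    finally show ?thesis by simp
  qed
  finally have Qb2: "\<bar>Q\<bar> \<le> 4 * h^2 * s powr (2*H*K - 2)" .
  have "\<bar>Q / c\<bar> = \<bar>Q\<bar> / c" using cpos by simp
  also have "\<dots> \<le> 4 * h^2 * s powr (2*H*K - 2) / h powr (2*H*K)"
    using Qb2 c1 h by (intro frac_le) auto
  also have "\<dots> = 4 * (h/s) powr (2 - 2*H*K)"
  proof -
    have e1: "h^2 = h powr 2" using h by (simp add: powr_realpow)
    have e2: "(h/s) powr (2 - 2*H*K) = h powr (2 - 2*H*K) / s powr (2 - 2*H*K)"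
      using h s by (simp add: powr_divide)
    have e3: "h powr (2 - 2*H*K) = h powr 2 / h powr (2*H*K)" by (rule powr_diff)
    have e4: "s powr (2 - 2*H*K) = s powr 2 / s powr (2*H*K)" by (rule powr_diff)
    have e5: "s powr (2*H*K - 2) = s powr (2*H*K) / s powr 2" by (rule powr_diff)
    have gen: "\<And>P A S B::real. 0 < A \<Longrightarrow> 0 < B \<Longrightarrow> 0 < S \<Longrightarrow>
       4 * P * (B / S) / A = 4 * ((P / A) / (S / B))" by (simp add: field_simps)
    have "0 < h powr (2*H*K)" "0 < s powr (2*H*K)" "0 < s powr 2" using h s by auto
    thus ?thesis unfolding e1 e2 e3 e4 e5 by (rule gen)
  qed
  finally show ?thesis using ratio by (simp add: c_def)
qed

lemma lim_pos: "(c::real) > 0 \<Longrightarrow> ((\<lambda>h::real. h powr c) \<longlongrightarrow> 0) (at_right 0)" by real_asymp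
lemma lim_neg: "(c::real) < 0 \<Longrightarrow> filterlim (\<lambda>h::real. h powr c) at_top (at_right 0)" by real_asymp
lemma lim_top: "(c::real) > 0 \<Longrightarrow> filterlim (\<lambda>h::real. h powr c) at_top at_top" by real_asymp

lemma not_ev_false: "\<not> eventually (\<lambda>_. False) (at_right (0::real))"
  by (simp add: trivial_limit_at_right_real)

lemma inf_char:
  fixes S :: "real set"
  assumes "\<And>\<beta>. \<beta> > g \<Longrightarrow> \<beta> \<in> S" "\<And>\<beta>. \<beta> \<in> S \<Longrightarrow> \<beta> \<ge> g"
  shows "Inf S = g"
proof -
  have ne: "S \<noteq> {}" using assms(1)[of "g+1"] by auto
  have bdd: "bdd_below S" using assms(2) by (rule bdd_belowI)
  have "g \<le> Inf S" using ne assms(2) by (intro cInf_greatest) auto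
  moreover have "Inf S \<le> g"
  proof (rule field_le_epsilon)
    fix e :: real assume "0 < e"
    thus "Inf S \<le> g + e" using assms(1)[of "g+e"] bdd by (intro cInf_lower) auto
  qed
  ultimately show ?thesis by simp
qed

lemma sup_char:
  fixes S :: "real set"
  assumes g: "g > 0" and "\<And>\<beta>. 0 < \<beta> \<Longrightarrow> \<beta> < g \<Longrightarrow> \<beta> \<in> S" "\<And>\<beta>. \<beta> \<in> S \<Longrightarrow> \<beta> \<le> g"
  shows "Sup S = g"
proof -
  have ne: "S \<noteq> {}" using assms(2)[of "g/2"] g by auto
  have bdd: "bdd_above S" using assms(3) by (rule bdd_aboveI)
  have "Sup S \<le> g" using ne assms(3) by (intro cSup_least) auto
  moreover have "g \<le> Sup S"
  proof (rule field_le_epsilon)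
    fix e :: real assume e: "0 < e"
    show "g \<le> Sup S + e"
    proof (cases "e < g")
      case True
      hence "g - e \<le> Sup S" using assms(2)[of "g-e"] bdd e by (intro cSup_upper) auto
      thus ?thesis by simp
    next
      case False
      have "g/2 \<le> Sup S" using assms(2)[of "g/2"] bdd g by (intro cSup_upper) auto
      thus ?thesis using False g by simp
    qed
  qed
  ultimately show ?thesis by simp
qed

lemma sqrt_powr: "0 < (x::real) \<Longrightarrow> sqrt (x powr a) = x powr (a/2)"
  by (simp add: powr_half_sqrt[symmetric] powr_powr)

lemma sqrt_close: "\<bar>r - 1\<bar> \<le> 1/2 \<Longrightarrow> \<bar>sqrt r - 1\<bar> \<le> \<bar>(r::real) - 1\<bar>"
proof -
  assume a: "\<bar>r - 1\<bar> \<le> 1/2"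
  hence r: "0 \<le> r" by linarith
  have "(sqrt r - 1) * (sqrt r + 1) = r - 1" using r by (simp add: algebra_simps)
  hence "\<bar>(sqrt r - 1) * (sqrt r + 1)\<bar> = \<bar>r - 1\<bar>" by simp
  moreover have "\<bar>sqrt r + 1\<bar> = sqrt r + 1" using r by simp
  ultimately have "\<bar>sqrt r - 1\<bar> * (sqrt r + 1) = \<bar>r - 1\<bar>" by (simp only: abs_mult)
  moreover have "sqrt r + 1 \<ge> 1" using r by simp
  moreover have "0 \<le> \<bar>sqrt r - 1\<bar>" by simp
  ultimately show ?thesis by (metis mult_le_cancel_left1 mult.commute abs_ge_zero order.trans le_cases mult_right_mono)
qed

lemma psi_basic:
  assumes "\<phi> \<in> Psi T" "0 < T"
  shows "eventually (\<lambda>\<delta>. 0 < \<delta> \<and> \<delta> < T \<and> 1 \<le> \<phi> \<delta> / \<delta>) (at_right 0)"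
proof -
  have "filterlim (\<lambda>h. \<phi> h / h) at_top (at_right 0)" using assms(1) by (simp add: Psi_def)
  hence e1: "eventually (\<lambda>h. 1 \<le> \<phi> h / h) (at_right 0)" by (simp add: filterlim_at_top)
  have e2: "eventually (\<lambda>h. 0 < h \<and> h < T) (at_right (0::real))"
    using assms(2) by (auto simp: eventually_at_right_field)
  show ?thesis using e1 e2 by eventually_elim auto
qed

lemma third_bound:
  fixes H K T :: real
  assumes H: "0 < H" "H < 1" and K: "0 < K" "K \<le> 1" and T: "0 < T" and phi: "\<phi> \<in> Psi T"
  shows "eventually (\<lambda>\<delta>. \<forall>s\<in>{\<phi> \<delta>..T - \<delta>}. \<forall>h\<in>{0<..\<delta>}.
          \<bar>bfbm_sigma2 H K s (s + h) / (2 powr (1 - K) * h powr (2 * H * K)) - 1\<bar>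
            \<le> 4 / (\<phi> \<delta> / \<delta>) powr (2 - 2 * H * K)) (at_right 0)"
  using psi_basic[OF phi T]
proof eventually_elim
  case (elim \<delta>)
  hence d: "0 < \<delta>" and L: "1 \<le> \<phi> \<delta> / \<delta>" by auto
  have pd: "\<delta> \<le> \<phi> \<delta>" using d L by (simp add: field_simps)
  have HK: "H*K < 1" using H K mult_left_le[of K H] by linarith
  show ?case
  proof (intro ballI)
    fix s h assume s: "s \<in> {\<phi> \<delta>..T - \<delta>}" and h: "h \<in> {0<..\<delta>}"
    have hs: "0 < h" "h \<le> s" using s h pd by auto
    have "\<bar>bfbm_sigma2 H K s (s + h) / (2 powr (1 - K) * h powr (2 * H * K)) - 1\<bar>
       \<le> 4 * (h/s) powr (2 - 2*H*K)" by (rule key_bound[OF H K hs])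
    also have "\<dots> \<le> 4 * (\<delta> / \<phi> \<delta>) powr (2 - 2*H*K)"
      using hs h s pd d HK by (intro mult_left_mono powr_mono2 frac_le) auto
    also have "(\<delta> / \<phi> \<delta>) = 1 / (\<phi> \<delta> / \<delta>)" by simp
    also have "4 * (1 / (\<phi> \<delta> / \<delta>)) powr (2 - 2*H*K) = 4 / (\<phi> \<delta> / \<delta>) powr (2 - 2*H*K)"
      using L by (simp add: powr_divide)
    finally show "\<bar>bfbm_sigma2 H K s (s + h) / (2 powr (1 - K) * h powr (2 * H * K)) - 1\<bar>
            \<le> 4 / (\<phi> \<delta> / \<delta>) powr (2 - 2 * H * K)" .
  qed
qed

lemma rbound:
  fixes H K T :: real
  assumes H: "0 < H" "H < 1" and K: "0 < K" "K \<le> 1" and T: "0 < T" and phi: "\<phi> \<in> Psi T"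
    and eps: "0 < \<epsilon>"
  shows "eventually (\<lambda>\<delta>. \<forall>s\<in>{\<phi> \<delta>..T - \<delta>}. \<forall>h\<in>{0<..\<delta>}.
          \<bar>bfbm_sigma2 H K s (s + h) / (2 powr (1 - K) * h powr (2 * H * K)) - 1\<bar> \<le> \<epsilon>) (at_right 0)"
proof -
  have HK: "H*K < 1" using H K mult_left_le[of K H] by linarith
  have "filterlim (\<lambda>h. \<phi> h / h) at_top (at_right 0)" using phi by (simp add: Psi_def)
  hence "filterlim (\<lambda>h. (\<phi> h / h) powr (2 - 2*H*K)) at_top (at_right 0)"
    using HK by (intro filterlim_compose[OF lim_top]) auto
  hence ev: "eventually (\<lambda>h. 8/\<epsilon> \<le> (\<phi> h / h) powr (2 - 2*H*K)) (at_right 0)"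
    by (simp add: filterlim_at_top)
  show ?thesis using ev third_bound[OF H K T phi]
  proof eventually_elim
    case (elim \<delta>)
    have "4 / (\<phi> \<delta> / \<delta>) powr (2 - 2*H*K) \<le> 8 / (8/\<epsilon>)"
      using elim(1) eps by (intro frac_le) auto
    also have "\<dots> = \<epsilon>" using eps by simp
    finally show ?case using elim(2) by (meson order.trans)
  qed
qed

lemma pt_bounds:
  fixes H K h x :: real
  assumes K: "0 < K" "K \<le> 1" and h: "0 < h"
    and r: "\<bar>x / (2 powr (1 - K) * h powr (2 * H * K)) - 1\<bar> \<le> 1/2"
  shows "h powr (H*K) / 2 \<le> sqrt x \<and> sqrt x \<le> 2 * h powr (H*K)"
proof -
  define P where "P = h powr (H*K)"
  have P: "0 < P" using h by (simp add: P_def)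
  have hP: "h powr (2*H*K) = P^2" unfolding P_def power2_eq_square powr_add[symmetric] by (simp add: algebra_simps)
  define c where "c = 2 powr (1-K) * h powr (2*H*K)"
  have k1: "(1::real) \<le> 2 powr (1-K)" using K by (intro ge_one_powr_ge_zero) auto
  have k2: "(2::real) powr (1-K) \<le> 2 powr 1" using K by (intro powr_mono) auto
  have c1: "P^2 \<le> c" "c \<le> 2 * P^2" using k1 k2 P unfolding c_def hP
    by (auto intro: mult_right_mono[of 1 _ "P^2", simplified] mult_right_mono[of _ 2 "P^2", simplified])
  have "0 < P^2" using P by simp
  hence cpos: "0 < c" using c1 by linarith
  have rr: "\<bar>x/c - 1\<bar> \<le> 1/2" using r unfolding c_def .
  have "1/2 \<le> x / c" "x / c \<le> 3/2" using rr abs_le_iff[of "x/c - 1"] by linarith+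
  hence x: "c/2 \<le> x" "x \<le> 3/2 * c" using cpos by (auto simp: field_simps)
  have "(P/2)^2 \<le> x" using x c1 by (simp add: power_divide)
  hence lo: "P/2 \<le> sqrt x" by (rule real_le_rsqrt)
  have "sqrt x \<le> sqrt ((2*P)^2)" using x c1 by (intro real_sqrt_le_mono) (simp add: power_mult_distrib)
  moreover have "sqrt ((2*P)^2) = 2*P" using P by (simp only: real_sqrt_abs abs_of_pos)
  ultimately have "sqrt x \<le> 2*P" by linarith
  with lo show ?thesis by (simp add: P_def)
qed

lemma sig_bounds:
  fixes H K T :: real
  assumes H: "0 < H" "H < 1" and K: "0 < K" "K \<le> 1" and T: "0 < T" and phi: "\<phi> \<in> Psi T"
  shows "eventually (\<lambda>h. 0 < h \<and> h < 1 \<and> \<phi> h \<le> T - h \<and> (\<forall>s\<in>{\<phi> h..T - h}.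
     h powr (H*K) / 2 \<le> bfbm_sigma H K s (s+h) \<and> bfbm_sigma H K s (s+h) \<le> 2 * h powr (H*K))) (at_right 0)"
proof -
  have "(\<phi> \<longlongrightarrow> 0) (at_right 0)" using phi by (simp add: Psi_def)
  hence e1: "eventually (\<lambda>h. \<phi> h < T/2) (at_right 0)" using T by (intro order_tendstoD(2)) auto
  have e2: "eventually (\<lambda>h. 0 < h \<and> h < min 1 (T/2)) (at_right (0::real))"
    using T by (auto simp: eventually_at_right_field intro!: exI[of _ "min 1 (T/2)"])
  have half: "(0::real) < 1/2" by simp
  show ?thesis using e1 e2 rbound[OF H K T phi half]
  proof eventually_elim
    case (elim h)
    have "\<forall>s\<in>{\<phi> h..T - h}. h powr (H*K) / 2 \<le> bfbm_sigma H K s (s+h) \<and> bfbm_sigma H K s (s+h) \<le> 2 * h powr (H*K)"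
    proof
      fix s assume "s \<in> {\<phi> h..T - h}"
      hence "\<bar>bfbm_sigma2 H K s (s + h) / (2 powr (1 - K) * h powr (2 * H * K)) - 1\<bar> \<le> 1/2"
        using elim by auto
      thus "h powr (H*K) / 2 \<le> bfbm_sigma H K s (s+h) \<and> bfbm_sigma H K s (s+h) \<le> 2 * h powr (H*K)"
        unfolding bfbm_sigma_def using pt_bounds[OF K] elim by blast
    qed
    thus ?case using elim by auto
  qed
qed

lemma sigma0: "0 < h \<Longrightarrow> 0 < H \<Longrightarrow> 0 < K \<Longrightarrow> bfbm_sigma H K 0 h = h powr (H*K)"
  unfolding bfbm_sigma_def by (simp add: sigma2_zero sqrt_powr)

lemma ratio_bounds:
  fixes h g b x :: real
  assumes h: "0 < h" and x: "h powr g / 2 \<le> x" "x \<le> 2 * h powr g"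
  shows "h powr (b - g) / 2 \<le> h powr b / x \<and> h powr b / x \<le> 2 * h powr (b - g)"
proof -
  have "0 < h powr g" using h by simp
  hence xp: "0 < x" using x by linarith
  have "h powr b / x \<le> h powr b / (h powr g / 2)" using x xp h by (intro divide_left_mono) auto
  also have "\<dots> = 2 * h powr (b - g)" by (simp add: powr_diff)
  finally have 1: "h powr b / x \<le> 2 * h powr (b - g)" .
  have "h powr (b - g) / 2 = h powr b / (2 * h powr g)" by (simp add: powr_diff)
  also have "\<dots> \<le> h powr b / x" using x xp h by (intro divide_left_mono) auto
  finally show ?thesis using 1 by simp
qed

lemma pow_ge1: "0 < (h::real) \<Longrightarrow> h \<le> 1 \<Longrightarrow> e \<le> 0 \<Longrightarrow> 1 \<le> h powr e"
  using powr_neg_mono[of e h 1] by simp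

lemma pow_le1: "0 < (h::real) \<Longrightarrow> h \<le> 1 \<Longrightarrow> 0 \<le> e \<Longrightarrow> h powr e \<le> 1"
  using powr_mono2[of e h 1] by simp

lemma orey_parts:
  fixes H K T :: real
  assumes H: "0 < H" "H < 1" and K: "0 < K" "K \<le> 1" and T: "0 < T" and phi: "\<phi> \<in> Psi T"
  shows "orey_upper_int T (bfbm_sigma H K) \<phi> = H*K" "orey_lower_int T (bfbm_sigma H K) \<phi> = H*K"
proof -
  note SB = sig_bounds[OF H K T phi]
  have g: "0 < H*K" using H K by simp
  show "orey_upper_int T (bfbm_sigma H K) \<phi> = H*K" unfolding orey_upper_int_def
  proof (rule inf_char)
    fix \<beta> :: real assume b: "\<beta> > H*K"
    have "\<forall>\<epsilon>>0. eventually (\<lambda>h. \<forall>s\<in>{\<phi> h..T - h}. \<bar>h powr \<beta> / bfbm_sigma H K s (s + h)\<bar> \<le> \<epsilon>) (at_right 0)"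
    proof (intro allI impI)
      fix \<epsilon> :: real assume e: "0 < \<epsilon>"
      have "eventually (\<lambda>h. h powr (\<beta> - H*K) < \<epsilon>/2) (at_right 0)"
        using b e by (intro order_tendstoD(2)[OF lim_pos]) auto
      thus "eventually (\<lambda>h. \<forall>s\<in>{\<phi> h..T - h}. \<bar>h powr \<beta> / bfbm_sigma H K s (s + h)\<bar> \<le> \<epsilon>) (at_right 0)"
        using SB
      proof eventually_elim
        case (elim h)
        show ?case
        proof
          fix s assume "s \<in> {\<phi> h..T - h}"
          hence "h powr (\<beta> - H*K) / 2 \<le> h powr \<beta> / bfbm_sigma H K s (s + h) \<and>
                 h powr \<beta> / bfbm_sigma H K s (s + h) \<le> 2 * h powr (\<beta> - H*K)"
            using elim by (intro ratio_bounds) auto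
          moreover have "0 \<le> h powr (\<beta> - H*K)" by simp
          ultimately show "\<bar>h powr \<beta> / bfbm_sigma H K s (s + h)\<bar> \<le> \<epsilon>" using elim by auto
        qed
      qed
    qed
    thus "\<beta> \<in> {\<beta>. \<beta> > 0 \<and> (\<forall>\<epsilon>>0. eventually (\<lambda>h.
      \<forall>s\<in>{\<phi> h..T - h}. \<bar>h powr \<beta> / bfbm_sigma H K s (s + h)\<bar> \<le> \<epsilon>) (at_right 0))}"
      using b g by auto
  next
    fix \<beta> :: real assume "\<beta> \<in> {\<beta>. \<beta> > 0 \<and> (\<forall>\<epsilon>>0. eventually (\<lambda>h.
      \<forall>s\<in>{\<phi> h..T - h}. \<bar>h powr \<beta> / bfbm_sigma H K s (s + h)\<bar> \<le> \<epsilon>) (at_right 0))}"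
    hence "\<forall>\<epsilon>>0. eventually (\<lambda>h. \<forall>s\<in>{\<phi> h..T - h}. \<bar>h powr \<beta> / bfbm_sigma H K s (s + h)\<bar> \<le> \<epsilon>) (at_right 0)"
      by blast
    hence ev: "eventually (\<lambda>h. \<forall>s\<in>{\<phi> h..T - h}. \<bar>h powr \<beta> / bfbm_sigma H K s (s + h)\<bar> \<le> 1/4) (at_right 0)"
      by (rule allE[of _ "1/4"]) simp
    show "\<beta> \<ge> H*K"
    proof (rule ccontr)
      assume b: "\<not> \<beta> \<ge> H*K"
      have "eventually (\<lambda>_. False) (at_right (0::real))" using ev SB
      proof eventually_elim
        case (elim h)
        hence s: "\<phi> h \<in> {\<phi> h..T - h}" by auto
        have "h powr (\<beta> - H*K) / 2 \<le> h powr \<beta> / bfbm_sigma H K (\<phi> h) (\<phi> h + h)"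
          using elim s by (intro ratio_bounds[THEN conjunct1]) auto
        moreover have "1 \<le> h powr (\<beta> - H*K)" using elim b by (intro pow_ge1) auto
        moreover have "\<bar>h powr \<beta> / bfbm_sigma H K (\<phi> h) (\<phi> h + h)\<bar> \<le> 1/4" using elim s by blast
        ultimately show False by linarith
      qed
      thus False using not_ev_false by blast
    qed
  qed
  show "orey_lower_int T (bfbm_sigma H K) \<phi> = H*K" unfolding orey_lower_int_def
  proof (rule sup_char[OF g])
    fix \<beta> :: real assume b: "0 < \<beta>" "\<beta> < H*K"
    have "\<forall>M. eventually (\<lambda>h. \<forall>s\<in>{\<phi> h..T - h}. h powr \<beta> / bfbm_sigma H K s (s + h) \<ge> M) (at_right 0)"
    proof
      fix M :: real
      have "filterlim (\<lambda>h::real. h powr (\<beta> - H*K)) at_top (at_right 0)"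
        using b by (intro lim_neg) auto
      hence "eventually (\<lambda>h. 2*M \<le> h powr (\<beta> - H*K)) (at_right 0)" by (simp add: filterlim_at_top)
      thus "eventually (\<lambda>h. \<forall>s\<in>{\<phi> h..T - h}. h powr \<beta> / bfbm_sigma H K s (s + h) \<ge> M) (at_right 0)"
        using SB
      proof eventually_elim
        case (elim h)
        show ?case
        proof
          fix s assume "s \<in> {\<phi> h..T - h}"
          hence "h powr (\<beta> - H*K) / 2 \<le> h powr \<beta> / bfbm_sigma H K s (s + h)"
            using elim by (intro ratio_bounds[THEN conjunct1]) auto
          thus "h powr \<beta> / bfbm_sigma H K s (s + h) \<ge> M" using elim by linarith
        qed
      qed
    qed
    thus "\<beta> \<in> {\<beta>. \<beta> > 0 \<and> (\<forall>M. eventually (\<lambda>h.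
      \<forall>s\<in>{\<phi> h..T - h}. h powr \<beta> / bfbm_sigma H K s (s + h) \<ge> M) (at_right 0))}"
      using b by auto
  next
    fix \<beta> :: real assume "\<beta> \<in> {\<beta>. \<beta> > 0 \<and> (\<forall>M. eventually (\<lambda>h.
      \<forall>s\<in>{\<phi> h..T - h}. h powr \<beta> / bfbm_sigma H K s (s + h) \<ge> M) (at_right 0))}"
    hence ev: "eventually (\<lambda>h. \<forall>s\<in>{\<phi> h..T - h}. h powr \<beta> / bfbm_sigma H K s (s + h) \<ge> 3) (at_right 0)"
      by auto
    show "\<beta> \<le> H*K"
    proof (rule ccontr)
      assume b: "\<not> \<beta> \<le> H*K"
      have "eventually (\<lambda>_. False) (at_right (0::real))" using ev SB
      proof eventually_elim
        case (elim h)
        hence s: "\<phi> h \<in> {\<phi> h..T - h}" by auto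
        have "h powr \<beta> / bfbm_sigma H K (\<phi> h) (\<phi> h + h) \<le> 2 * h powr (\<beta> - H*K)"
          using elim s by (intro ratio_bounds[THEN conjunct2]) auto
        moreover have "h powr (\<beta> - H*K) \<le> 1" using elim b by (intro pow_le1) auto
        moreover have "h powr \<beta> / bfbm_sigma H K (\<phi> h) (\<phi> h + h) \<ge> 3" using elim s by blast
        ultimately show False by linarith
      qed
      thus False using not_ev_false by blast
    qed
  qed
qed

lemma orey_zero:
  fixes H K :: real
  assumes H: "0 < H" and K: "0 < K"
  shows "orey_upper_0 (bfbm_sigma H K) = H*K" "orey_lower_0 (bfbm_sigma H K) = H*K"
proof -
  have g: "0 < H*K" using H K by simp
  have small: "eventually (\<lambda>h. 0 < h \<and> h < 1) (at_right (0::real))"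
    by (auto simp: eventually_at_right_field intro!: exI[of _ 1])
  have eq: "eventually (\<lambda>h. h powr \<beta> / bfbm_sigma H K 0 h = h powr (\<beta> - H*K)) (at_right 0)" for \<beta>
    using small by eventually_elim (simp add: sigma0 H K powr_diff)
  show "orey_upper_0 (bfbm_sigma H K) = H*K" unfolding orey_upper_0_def
  proof (rule inf_char)
    fix \<beta> :: real assume b: "\<beta> > H*K"
    have "((\<lambda>h. h powr (\<beta> - H*K)) \<longlongrightarrow> 0) (at_right 0)" using b by (intro lim_pos) auto
    hence "((\<lambda>h. h powr \<beta> / bfbm_sigma H K 0 h) \<longlongrightarrow> 0) (at_right 0)" using tendsto_cong[OF eq] by blast
    thus "\<beta> \<in> {\<beta>. \<beta> > 0 \<and> ((\<lambda>h. h powr \<beta> / bfbm_sigma H K 0 h) \<longlongrightarrow> 0) (at_right 0)}" using b g by auto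
  next
    fix \<beta> :: real assume "\<beta> \<in> {\<beta>. \<beta> > 0 \<and> ((\<lambda>h. h powr \<beta> / bfbm_sigma H K 0 h) \<longlongrightarrow> 0) (at_right 0)}"
    hence "((\<lambda>h. h powr (\<beta> - H*K)) \<longlongrightarrow> 0) (at_right 0)" using tendsto_cong[OF eq] by blast
    hence ev: "eventually (\<lambda>h. h powr (\<beta> - H*K) < 1/2) (at_right 0)" by (intro order_tendstoD(2)) auto
    show "\<beta> \<ge> H*K"
    proof (rule ccontr)
      assume b: "\<not> \<beta> \<ge> H*K"
      have "eventually (\<lambda>_. False) (at_right (0::real))" using ev small
      proof eventually_elim
        case (elim h)
        have "1 \<le> h powr (\<beta> - H*K)" using elim b by (intro pow_ge1) auto
        thus False using elim by linarith
      qed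
      thus False using not_ev_false by blast
    qed
  qed
  show "orey_lower_0 (bfbm_sigma H K) = H*K" unfolding orey_lower_0_def
  proof (rule sup_char[OF g])
    fix \<beta> :: real assume b: "0 < \<beta>" "\<beta> < H*K"
    have "filterlim (\<lambda>h. h powr (\<beta> - H*K)) at_top (at_right 0)" using b by (intro lim_neg) auto
    hence "filterlim (\<lambda>h. h powr \<beta> / bfbm_sigma H K 0 h) at_top (at_right 0)"
      using filterlim_cong[OF refl refl eq] by blast
    thus "\<beta> \<in> {\<beta>. \<beta> > 0 \<and> filterlim (\<lambda>h. h powr \<beta> / bfbm_sigma H K 0 h) at_top (at_right 0)}" using b by auto
  next
    fix \<beta> :: real assume "\<beta> \<in> {\<beta>. \<beta> > 0 \<and> filterlim (\<lambda>h. h powr \<beta> / bfbm_sigma H K 0 h) at_top (at_right 0)}"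
    hence "filterlim (\<lambda>h. h powr (\<beta> - H*K)) at_top (at_right 0)"
      using filterlim_cong[OF refl refl eq] by blast
    hence ev: "eventually (\<lambda>h. 3 \<le> h powr (\<beta> - H*K)) (at_right 0)" by (simp add: filterlim_at_top)
    show "\<beta> \<le> H*K"
    proof (rule ccontr)
      assume b: "\<not> \<beta> \<le> H*K"
      have "eventually (\<lambda>_. False) (at_right (0::real))" using ev small
      proof eventually_elim
        case (elim h)
        have "h powr (\<beta> - H*K) \<le> 1" using elim b by (intro pow_le1) auto
        thus False using elim by linarith
      qed
      thus False using not_ev_false by blast
    qed
  qed
qed

theorem mainTheorem13:
  fixes H K T :: real
  assumes "0 < H" "H < 1" "0 < K" "K \<le> 1" "0 < T"
  shows "cond_C1 (bfbm_sigma H K) (H * K)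
    \<and> cond_C2 T (bfbm_sigma H K) (H * K) (2 powr ((1 - K) / 2))
    \<and> (\<forall>\<phi>\<in>Psi T. eventually (\<lambda>\<delta>. \<forall>s\<in>{\<phi> \<delta>..T - \<delta>}. \<forall>h\<in>{0<..\<delta>}.
          \<bar>bfbm_sigma2 H K s (s + h) / (2 powr (1 - K) * h powr (2 * H * K)) - 1\<bar>
            \<le> 8 / (\<phi> \<delta> / \<delta>) powr (2 - 2 * H * K)) (at_right 0))
    \<and> has_orey_index T (bfbm_sigma H K) (H * K)"
proof (intro conjI)
  note H = assms(1,2) and K = assms(3,4) and T = assms(5)
  show "cond_C1 (bfbm_sigma H K) (H * K)" unfolding cond_C1_def
  proof (rule bigoI[where c=1])
    have "eventually (\<lambda>h. 0 < h) (at_right (0::real))" by (rule eventually_at_right_less)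
    thus "eventually (\<lambda>x. norm (bfbm_sigma H K 0 x) \<le> 1 * norm (x powr (H*K))) (at_right 0)"
      by eventually_elim (simp add: sigma0 H K)
  qed
  show "cond_C2 T (bfbm_sigma H K) (H * K) (2 powr ((1 - K) / 2))" unfolding cond_C2_def
  proof (intro ballI allI impI)
    fix \<phi> and \<epsilon> :: real assume phi: "\<phi> \<in> Psi T" and e: "0 < \<epsilon>"
    have me: "0 < min \<epsilon> (1/2)" using e by simp
    show "eventually (\<lambda>\<delta>. \<forall>t\<in>{\<phi> \<delta>..T - \<delta>}. \<forall>h\<in>{0<..\<delta>}.
       \<bar>bfbm_sigma H K t (t + h) / (2 powr ((1 - K) / 2) * h powr (H * K)) - 1\<bar> \<le> \<epsilon>) (at_right 0)"
      using rbound[OF H K T phi me]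
    proof eventually_elim
      case (elim \<delta>)
      show ?case
      proof (intro ballI)
        fix t h assume t: "t \<in> {\<phi> \<delta>..T - \<delta>}" and h: "h \<in> {0<..\<delta>}"
        define r where "r = bfbm_sigma2 H K t (t + h) / (2 powr (1 - K) * h powr (2 * H * K))"
        have r: "\<bar>r - 1\<bar> \<le> min \<epsilon> (1/2)" using elim t h unfolding r_def by blast
        have hp: "0 < h" using h by simp
        have "sqrt (2 powr (1 - K) * h powr (2 * H * K)) = 2 powr ((1 - K) / 2) * h powr (H * K)"
          using hp by (simp add: real_sqrt_mult sqrt_powr)
        hence "bfbm_sigma H K t (t + h) / (2 powr ((1 - K) / 2) * h powr (H * K)) = sqrt r"
          unfolding r_def bfbm_sigma_def by (simp add: real_sqrt_divide)
        moreover have "\<bar>sqrt r - 1\<bar> \<le> \<bar>r - 1\<bar>" using r by (intro sqrt_close) auto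
        ultimately show "\<bar>bfbm_sigma H K t (t + h) / (2 powr ((1 - K) / 2) * h powr (H * K)) - 1\<bar> \<le> \<epsilon>"
          using r by linarith
      qed
    qed
  qed
  show "\<forall>\<phi>\<in>Psi T. eventually (\<lambda>\<delta>. \<forall>s\<in>{\<phi> \<delta>..T - \<delta>}. \<forall>h\<in>{0<..\<delta>}.
          \<bar>bfbm_sigma2 H K s (s + h) / (2 powr (1 - K) * h powr (2 * H * K)) - 1\<bar>
            \<le> 8 / (\<phi> \<delta> / \<delta>) powr (2 - 2 * H * K)) (at_right 0)"
  proof
    fix \<phi> assume phi: "\<phi> \<in> Psi T"
    show "eventually (\<lambda>\<delta>. \<forall>s\<in>{\<phi> \<delta>..T - \<delta>}. \<forall>h\<in>{0<..\<delta>}.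
          \<bar>bfbm_sigma2 H K s (s + h) / (2 powr (1 - K) * h powr (2 * H * K)) - 1\<bar>
            \<le> 8 / (\<phi> \<delta> / \<delta>) powr (2 - 2 * H * K)) (at_right 0)"
      using third_bound[OF H K T phi]
    proof eventually_elim
      case (elim \<delta>)
      have "4 / (\<phi> \<delta> / \<delta>) powr (2 - 2 * H * K) \<le> 8 / (\<phi> \<delta> / \<delta>) powr (2 - 2 * H * K)"
        by (intro divide_right_mono) auto
      thus ?case using elim by (meson order.trans)
    qed
  qed
  show "has_orey_index T (bfbm_sigma H K) (H * K)" unfolding has_orey_index_def
    using orey_parts[OF H K T] orey_zero[of H K] H K by auto
qed

end
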